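(* If a CRN protocol $\Pi=(\mathcal{S},\mathcal{R})$ is stably (resp. haltingly) correct with respect to an interface $\mathcal{I}$ under a weakly fair scheduler, then $\Pi$ is also stably (resp. haltingly) correct with respect to $\mathcal{I}$ under a strongly fair scheduler.
   Context: CRN protocol $\Pi=(\mathcal{S},\mathcal{R})$: finite species set $\mathcal{S}$, finite reaction set $\mathcal{R}\subset\mathbb{N}^{\mathcal{S}}\times\mathbb{N}^{\mathcal{S}}$ of reactions $(\mathbf{r},\mathbf{p})$ with $\|\mathbf{r}\|_1\in\{1,2\}$, $\|\mathbf{r}\|_1\le\|\mathbf{p}\|_1$, each reactant vector $\mathbf{r}$ with $1\le\|\mathbf{r}\|_1\le2$ having at least one reaction, void reactions ($\mathbf{r}=\mathbf{p}$) being the unique reaction for their reactant vector; the protocol respects finite density (configurations reachable from $\mathbf{c}$ have molecular count $O(\|\mathbf{c}\|_1)$). Configurations $\mathbf{c}\in\mathbb{N}^{\mathcal{S}}$, $\|\mathbf{c}\|_1\ge1$; $(\mathbf{r},\mathbf{p})$ applicable to $\mathbf{c}$ iff $\mathbf{r}\le\mathbf{c}$, producing $\mathbf{c}-\mathbf{r}+\mathbf{p}$; $\operatorname{app}(\mathbf{c})$ the applicable reactions; reachability $\stackrel{*}{\rightharpoonup}$. $\mathrm{stab}(Z)=\{\mathbf{c}\in Z:\mathbf{c}\stackrel{*}{\rightharpoonup}\mathbf{c}'\Rightarrow\mathbf{c}'\in Z\}$, $\mathrm{halt}(Z)=\{\mathbf{c}\in Z:\mathbf{c}\stackrel{*}{\rightharpoonup}\mathbf{c}'\Rightarrow\mathbf{c}'=\mathbf{c}\}$.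 An execution $\langle\mathbf{c}^t,\alpha^t\rangle_{t\ge0}$ has $\alpha^t\in\operatorname{app}(\mathbf{c}^t)$, $\mathbf{c}^{t+1}=\alpha^t(\mathbf{c}^t)$. Weakly fair: for all $t$ and $\alpha\in\operatorname{app}(\mathbf{c}^t)$ there is $t'\ge t$ with $\alpha^{t'}=\alpha$ or $\alpha\notin\operatorname{app}(\mathbf{c}^{t'})$. Strongly fair: if a configuration $\mathbf{c}$ appears infinitely often then every configuration reachable from $\mathbf{c}$ appears infinitely often. Stabilizes (halts) into $Z$: some $\mathbf{c}^t\in\mathrm{stab}(Z)$ ($\mathrm{halt}(Z)$). Interface $\mathcal{I}=(\mathcal{U},\mu,\mathcal{C})$: $\mu:\mathcal{S}\to\mathcal{U}$, $\mathcal{C}\subseteq\mathbb{N}^{\mathcal{U}}\times\mathbb{N}^{\mathcal{U}}$, $\mu(\mathbf{c})(u)=\sum_{A:\mu(A)=u}\mathbf{c}(A)$, $Z_{\mathcal{I}}(\mathbf{c}^0)=\{\mathbf{c}:(\mu(\mathbf{c}^0),\mu(\mathbf{c}))\in\mathcal{C}\}$; $\mathbf{c}^0$ valid if $Z_{\mathcal{I}}(\mathbf{c}^0)\ne\emptyset$. $\Pi$ is stably (haltingly) correct w.r.t. $\mathcal{I}$ under a weakly (resp. strongly) fair scheduler if every weakly (resp. strongly) fair execution from a valid $\mathbf{c}^0$ stabilizes (halts) into $Z_{\mathcal{I}}(\mathbf{c}^0)$. *)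

theory Defs
  imports Main
begin

text \<open>Species: a finite type 'a. Configurations: vectors 'a \<Rightarrow> nat.
  Reactions: pairs (reactant vector, product vector).\<close>

type_synonym 'a config = "'a \<Rightarrow> nat"
type_synonym 'a reaction = "'a config \<times> 'a config"

definition vnorm :: "('a::finite) config \<Rightarrow> nat" where
  "vnorm c = (\<Sum>A\<in>UNIV. c A)"

definition is_config :: "('a::finite) config \<Rightarrow> bool" where
  "is_config c \<longleftrightarrow> vnorm c \<ge> 1"

definition app :: "('a::finite) reaction set \<Rightarrow> 'a config \<Rightarrow> 'a reaction set" where
  "app R c = {(r, p) \<in> R. r \<le> c}"

definition apply_rxn :: "'a reaction \<Rightarrow> 'a config \<Rightarrow> 'a config" where
  "apply_rxn \<alpha> c = (\<lambda>A. c A - fst \<alpha> A + snd \<alpha> A)"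

definition step :: "('a::finite) reaction set \<Rightarrow> 'a config \<Rightarrow> 'a config \<Rightarrow> bool" where
  "step R c c' \<longleftrightarrow> (\<exists>\<alpha>\<in>app R c. c' = apply_rxn \<alpha> c)"

definition reach :: "('a::finite) reaction set \<Rightarrow> 'a config \<Rightarrow> 'a config \<Rightarrow> bool" where
  "reach R = (step R)\<^sup>*\<^sup>*"

text \<open>Well-formed CRN protocol (including finite density).\<close>
definition crn_protocol :: "('a::finite) reaction set \<Rightarrow> bool" where
  "crn_protocol R \<longleftrightarrow>
     finite R \<and>
     (\<forall>(r, p)\<in>R. vnorm r \<in> {1, 2} \<and> vnorm r \<le> vnorm p) \<and>
     (\<forall>r. 1 \<le> vnorm r \<and> vnorm r \<le> 2 \<longrightarrow> (\<exists>p. (r, p) \<in> R)) \<and>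
     (\<forall>r p. (r, r) \<in> R \<and> (r, p) \<in> R \<longrightarrow> p = r) \<and>
     (\<exists>K::nat. \<forall>c c'. is_config c \<and> reach R c c' \<longrightarrow> vnorm c' \<le> K * vnorm c)"

definition stab :: "('a::finite) reaction set \<Rightarrow> 'a config set \<Rightarrow> 'a config set" where
  "stab R Z = {c \<in> Z. \<forall>c'. reach R c c' \<longrightarrow> c' \<in> Z}"

definition halt :: "('a::finite) reaction set \<Rightarrow> 'a config set \<Rightarrow> 'a config set" where
  "halt R Z = {c \<in> Z. \<forall>c'. reach R c c' \<longrightarrow> c' = c}"

definition execution ::
  "('a::finite) reaction set \<Rightarrow> (nat \<Rightarrow> 'a config) \<Rightarrow> (nat \<Rightarrow> 'a reaction) \<Rightarrow> bool" where
  "execution R c \<alpha> \<longleftrightarrow> (\<forall>t. \<alpha> t \<in> app R (c t) \<and> c (Suc t) = apply_rxn (\<alpha> t) (c t))"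

definition weakly_fair ::
  "('a::finite) reaction set \<Rightarrow> (nat \<Rightarrow> 'a config) \<Rightarrow> (nat \<Rightarrow> 'a reaction) \<Rightarrow> bool" where
  "weakly_fair R c \<alpha> \<longleftrightarrow>
     (\<forall>t. \<forall>\<beta>\<in>app R (c t). \<exists>t'\<ge>t. \<alpha> t' = \<beta> \<or> \<beta> \<notin> app R (c t'))"

definition strongly_fair ::
  "('a::finite) reaction set \<Rightarrow> (nat \<Rightarrow> 'a config) \<Rightarrow> (nat \<Rightarrow> 'a reaction) \<Rightarrow> bool" where
  "strongly_fair R c \<alpha> \<longleftrightarrow>
     (\<forall>d. (\<forall>n. \<exists>t\<ge>n. c t = d) \<longrightarrow>
        (\<forall>d'. reach R d d' \<longrightarrow> (\<forall>n. \<exists>t\<ge>n. c t = d')))"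

text \<open>Interface (U, mu, C): species map mu :: 'a \<Rightarrow> 'u, constraint C.\<close>
definition mu_img :: "('a::finite \<Rightarrow> 'u) \<Rightarrow> 'a config \<Rightarrow> ('u \<Rightarrow> nat)" where
  "mu_img \<mu> c = (\<lambda>u. \<Sum>A\<in>{A. \<mu> A = u}. c A)"

definition Z_I :: "('a::finite \<Rightarrow> 'u) \<Rightarrow> (('u \<Rightarrow> nat) \<times> ('u \<Rightarrow> nat)) set
                    \<Rightarrow> 'a config \<Rightarrow> 'a config set" where
  "Z_I \<mu> C c0 = {c. is_config c \<and> (mu_img \<mu> c0, mu_img \<mu> c) \<in> C}"

definition valid_init :: "('a::finite \<Rightarrow> 'u) \<Rightarrow> (('u \<Rightarrow> nat) \<times> ('u \<Rightarrow> nat)) set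
                    \<Rightarrow> 'a config \<Rightarrow> bool" where
  "valid_init \<mu> C c0 \<longleftrightarrow> is_config c0 \<and> Z_I \<mu> C c0 \<noteq> {}"

definition correct_under ::
  "('a::finite) reaction set
   \<Rightarrow> ('a config set \<Rightarrow> 'a config set)
   \<Rightarrow> ((nat \<Rightarrow> 'a config) \<Rightarrow> (nat \<Rightarrow> 'a reaction) \<Rightarrow> bool)
   \<Rightarrow> ('a \<Rightarrow> 'u) \<Rightarrow> (('u \<Rightarrow> nat) \<times> ('u \<Rightarrow> nat)) set \<Rightarrow> bool" where
  "correct_under R target fair \<mu> C \<longleftrightarrow>
     (\<forall>c \<alpha>. valid_init \<mu> C (c 0) \<and> execution R c \<alpha> \<and> fair c \<alpha>
        \<longrightarrow> (\<exists>t. c t \<in> target (Z_I \<mu> C (c 0))))"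

definition stably_correct_weak where
  "stably_correct_weak R \<mu> C = correct_under R (stab R) (weakly_fair R) \<mu> C"
definition stably_correct_strong where
  "stably_correct_strong R \<mu> C = correct_under R (stab R) (strongly_fair R) \<mu> C"
definition haltingly_correct_weak where
  "haltingly_correct_weak R \<mu> C = correct_under R (halt R) (weakly_fair R) \<mu> C"
definition haltingly_correct_strong where
  "haltingly_correct_strong R \<mu> C = correct_under R (halt R) (strongly_fair R) \<mu> C"

end

theory Submission
  imports Defs "HOL-Library.Infinite_Set"
begin

lemma vnorm_apply:
  assumes "crn_protocol R" "\<alpha> \<in> app R c"
  shows "vnorm c \<le> vnorm (apply_rxn \<alpha> c)"
proof -
  obtain r p where a: "\<alpha> = (r, p)" "(r,p) \<in> R" "r \<le> c" using assms(2) unfolding app_def by auto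
  have rp: "vnorm r \<le> vnorm p" using assms(1) a(2) unfolding crn_protocol_def by auto
  have pt: "apply_rxn \<alpha> c A + r A = c A + p A" for A
  proof -
    have "r A \<le> c A" using a(3) by (simp add: le_fun_def)
    thus ?thesis unfolding a(1) apply_rxn_def by simp
  qed
  have "vnorm (apply_rxn \<alpha> c) + vnorm r = (\<Sum>A\<in>UNIV. apply_rxn \<alpha> c A + r A)"
    unfolding vnorm_def by (rule sum.distrib[symmetric])
  also have "\<dots> = (\<Sum>A\<in>UNIV. c A + p A)" using pt by presburger
  also have "\<dots> = vnorm c + vnorm p" unfolding vnorm_def by (rule sum.distrib)
  finally have "vnorm (apply_rxn \<alpha> c) + vnorm r = vnorm c + vnorm p" .
  thus ?thesis using rp by linarith
qed

lemma app_nonempty: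
  assumes "crn_protocol R" "vnorm c \<ge> 1"
  shows "app R c \<noteq> {}"
proof -
  obtain A where A: "c A \<ge> 1"
  proof (rule ccontr)
    assume "\<not> thesis"
    with that have "\<forall>A. c A = 0" by (metis less_one not_le)
    hence "vnorm c = 0" unfolding vnorm_def by simp
    with assms(2) show False by simp
  qed
  define r :: "'a config" where "r = (\<lambda>B. if B = A then 1 else 0)"
  have "vnorm r = 1" unfolding vnorm_def r_def by simp
  moreover have "\<forall>r. 1 \<le> vnorm r \<and> vnorm r \<le> 2 \<longrightarrow> (\<exists>p. (r, p) \<in> R)"
    using assms(1) unfolding crn_protocol_def by blast
  ultimately obtain p where p: "(r, p) \<in> R" by fastforce
  have "r \<le> c" using A unfolding r_def le_fun_def by auto
  with p show ?thesis unfolding app_def by auto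
qed

lemma exec_reach:
  assumes "execution R c \<alpha>"
  shows "reach R (c s) (c (s + k))"
proof (induction k)
  case 0 then show ?case unfolding reach_def by simp
next
  case (Suc k)
  have "step R (c (s+k)) (c (Suc (s+k)))"
    using assms unfolding execution_def step_def by blast
  with Suc show ?case unfolding reach_def by simp
qed

lemma finite_bounded: "finite {c :: ('a::finite) config. vnorm c \<le> N}"
proof -
  have "{c :: 'a config. vnorm c \<le> N} \<subseteq>
        {f. \<forall>x. (x \<in> (UNIV::'a set) \<longrightarrow> f x \<in> {0..N}) \<and> (x \<notin> UNIV \<longrightarrow> f x = 0)}"
  proof
    fix c :: "'a config" assume "c \<in> {c. vnorm c \<le> N}"
    hence "vnorm c \<le> N" by simp
    moreover have "\<And>x. c x \<le> vnorm c" unfolding vnorm_def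
      by (rule member_le_sum) auto
    ultimately show "c \<in> {f. \<forall>x. (x \<in> (UNIV::'a set) \<longrightarrow> f x \<in> {0..N}) \<and> (x \<notin> UNIV \<longrightarrow> f x = 0)}"
      using le_trans by fastforce
  qed
  moreover have "finite {f. \<forall>x. (x \<in> (UNIV::'a set) \<longrightarrow> f x \<in> {0..N}) \<and> (x \<notin> UNIV \<longrightarrow> f x = (0::nat))}"
    by (rule finite_set_of_finite_funs) auto
  ultimately show ?thesis by (rule finite_subset)
qed

lemma recurrent:
  assumes "crn_protocol R" "is_config (c 0)" "execution R c \<alpha>"
  shows "\<exists>T. \<forall>n. \<exists>t\<ge>n. c t = c T"
proof -
  obtain K where K: "\<forall>c c'. is_config c \<and> reach R c c' \<longrightarrow> vnorm c' \<le> K * vnorm c"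
    using assms(1) unfolding crn_protocol_def by blast
  have "vnorm (c t) \<le> K * vnorm (c 0)" for t
  proof -
    have "reach R (c 0) (c t)" using exec_reach[OF assms(3), of 0 t] by simp
    thus ?thesis using K assms(2) by blast
  qed
  hence "range c \<subseteq> {x. vnorm x \<le> K * vnorm (c 0)}" by auto
  hence "finite (c ` UNIV)" using finite_bounded finite_subset by blast
  then obtain y where y: "y \<in> range c" "infinite (c -` {y})"
    by (rule inf_img_fin_domE) simp
  then obtain T where "y = c T" by auto
  with y(2) show ?thesis unfolding infinite_nat_iff_unbounded_le by auto
qed

lemma weak_exists:
  assumes P: "crn_protocol R" and d: "vnorm d \<ge> 1"
  shows "\<exists>e \<beta>. e 0 = d \<and> execution R e \<beta> \<and> weakly_fair R e \<beta>"
proof -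
  have fin: "finite R" using P unfolding crn_protocol_def by auto
  then obtain rs where rs: "set rs = R" using finite_list by blast
  define n where "n = length rs"
  define ch where "ch = (\<lambda>c t. if rs ! (t mod n) \<in> app R c then rs ! (t mod n) else (SOME b. b \<in> app R c))"
  define e where "e = rec_nat d (\<lambda>t c. apply_rxn (ch c t) c)"
  have e0: "e 0 = d" and eS: "\<And>t. e (Suc t) = apply_rxn (ch (e t) t) (e t)"
    unfolding e_def by simp_all
  have inv: "\<And>t. vnorm (e t) \<ge> 1 \<and> ch (e t) t \<in> app R (e t)"
  proof -
    fix t show "vnorm (e t) \<ge> 1 \<and> ch (e t) t \<in> app R (e t)"
    proof (induction t)
      case 0
      have "app R d \<noteq> {}" using app_nonempty[OF P d] .
      hence "(SOME b. b \<in> app R d) \<in> app R d" by (simp add: some_in_eq)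
      hence "ch d 0 \<in> app R d" unfolding ch_def by simp
      then show ?case using d e0 by simp
    next
      case (Suc t)
      have v: "vnorm (e (Suc t)) \<ge> 1" using Suc vnorm_apply[OF P, of "ch (e t) t" "e t"] eS[of t] by simp
      have "app R (e (Suc t)) \<noteq> {}" using app_nonempty[OF P v] .
      hence "(SOME b. b \<in> app R (e (Suc t))) \<in> app R (e (Suc t))" by (simp add: some_in_eq)
      hence "ch (e (Suc t)) (Suc t) \<in> app R (e (Suc t))" unfolding ch_def by simp
      then show ?case using v by simp
    qed
  qed
  have ex: "execution R e (\<lambda>t. ch (e t) t)" unfolding execution_def using inv eS by blast
  have wf: "weakly_fair R e (\<lambda>t. ch (e t) t)"
    unfolding weakly_fair_def
  proof (intro allI ballI)
    fix t b assume b: "b \<in> app R (e t)"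
    hence "b \<in> set rs" using rs unfolding app_def by auto
    then obtain i where i: "i < n" "rs ! i = b" unfolding n_def by (auto simp: in_set_conv_nth)
    define t' where "t' = n * t + i"
    have "n \<ge> 1" using i by simp
    hence "t' \<ge> t" unfolding t'_def by (metis le_add1 mult_1 mult_le_mono1 order_trans)
    moreover have "t' mod n = i" unfolding t'_def using i by simp
    ultimately show "\<exists>t'\<ge>t. ch (e t') t' = b \<or> b \<notin> app R (e t')"
    proof (intro exI[of _ t'] conjI)
      show "t \<le> t'" by fact
      show "ch (e t') t' = b \<or> b \<notin> app R (e t')"
        unfolding ch_def using i \<open>t' mod n = i\<close> by simp
    qed
  qed
  show ?thesis using e0 ex wf by blast
qed

lemma vnorm_exec:
  assumes "crn_protocol R" "execution R c \<alpha>"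
  shows "vnorm (c 0) \<le> vnorm (c t)"
proof (induction t)
  case 0 then show ?case by simp
next
  case (Suc t)
  then show ?case using assms vnorm_apply[OF assms(1), of "\<alpha> t" "c t"] unfolding execution_def
    by (metis order_trans)
qed

lemma main:
  assumes P: "crn_protocol R" and W: "correct_under R target (weakly_fair R) \<mu> C"
  shows "correct_under R target (strongly_fair R) \<mu> C"
  unfolding correct_under_def
proof (intro allI impI)
  fix c \<alpha> assume H: "valid_init \<mu> C (c 0) \<and> execution R c \<alpha> \<and> strongly_fair R c \<alpha>"
  have ic: "is_config (c 0)" and ex: "execution R c \<alpha>" and sf: "strongly_fair R c \<alpha>"
    using H unfolding valid_init_def by auto
  obtain T where T: "\<forall>n. \<exists>t\<ge>n. c t = c T" using recurrent[OF P ic ex] by blast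
  have "vnorm (c T) \<ge> 1" using vnorm_exec[OF P ex, of T] ic unfolding is_config_def by simp
  then obtain e \<beta> where e: "e 0 = c T" "execution R e \<beta>" "weakly_fair R e \<beta>"
    using weak_exists[OF P] by blast
  define e' where "e' = (\<lambda>t. if t < T then c t else e (t - T))"
  define \<alpha>' where "\<alpha>' = (\<lambda>t. if t < T then \<alpha> t else \<beta> (t - T))"
  have e'0: "e' 0 = c 0" unfolding e'_def using e(1) by auto
  have ex': "execution R e' \<alpha>'"
    unfolding execution_def
  proof
    fix t
    show "\<alpha>' t \<in> app R (e' t) \<and> e' (Suc t) = apply_rxn (\<alpha>' t) (e' t)"
    proof (cases "t < T")
      case True
      have a: "\<alpha> t \<in> app R (c t)" "c (Suc t) = apply_rxn (\<alpha> t) (c t)"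
        using ex unfolding execution_def by blast+
      have "e' (Suc t) = c (Suc t)"
      proof (cases "Suc t < T")
        case True thus ?thesis unfolding e'_def by simp
      next
        case False
        hence "Suc t = T" using \<open>t < T\<close> by simp
        thus ?thesis unfolding e'_def using e(1) by simp
      qed
      moreover have "e' t = c t" "\<alpha>' t = \<alpha> t" unfolding e'_def \<alpha>'_def using True by simp_all
      ultimately show ?thesis using a by simp
    next
      case False
      then have "Suc t - T = Suc (t - T)" by simp
      then show ?thesis using False e(2) unfolding e'_def \<alpha>'_def execution_def by auto
    qed
  qed
  have wf': "weakly_fair R e' \<alpha>'"
    unfolding weakly_fair_def
  proof (intro allI ballI)
    fix t b assume b: "b \<in> app R (e' t)"
    show "\<exists>t'\<ge>t. \<alpha>' t' = b \<or> b \<notin> app R (e' t')"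
    proof (cases "t < T")
      case True
      show ?thesis
      proof (cases "b \<in> app R (e 0)")
        case False
        then show ?thesis using True e(1) unfolding e'_def
          by (intro exI[of _ T]) auto
      next
        case bb: True
        then obtain s where "\<beta> s = b \<or> b \<notin> app R (e s)" using e(3) unfolding weakly_fair_def by blast
        then show ?thesis using True unfolding e'_def \<alpha>'_def
          by (intro exI[of _ "s + T"]) auto
      qed
    next
      case False
      hence "b \<in> app R (e (t - T))" using b unfolding e'_def by simp
      then obtain s where "s \<ge> t - T" "\<beta> s = b \<or> b \<notin> app R (e s)" using e(3) unfolding weakly_fair_def by blast
      then show ?thesis using False unfolding e'_def \<alpha>'_def
        by (intro exI[of _ "s + T"]) auto
    qed
  qed
  have "valid_init \<mu> C (e' 0)" using H e'0 by simp
  then obtain t where t: "e' t \<in> target (Z_I \<mu> C (e' 0))"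
    using W ex' wf' unfolding correct_under_def by blast
  show "\<exists>t. c t \<in> target (Z_I \<mu> C (c 0))"
  proof (cases "t < T")
    case True
    then show ?thesis using t e'0 unfolding e'_def by auto
  next
    case False
    have "reach R (e 0) (e (0 + (t - T)))" by (rule exec_reach[OF e(2)])
    hence "reach R (c T) (e' t)" using False e(1) unfolding e'_def by simp
    hence "\<forall>n. \<exists>s\<ge>n. c s = e' t" using sf T unfolding strongly_fair_def by blast
    then obtain s where "c s = e' t" by blast
    then show ?thesis using t e'0 by metis
  qed
qed

theorem corollary3p4:
  fixes R :: "('a::finite) reaction set" and \<mu> :: "'a \<Rightarrow> 'u"
    and C :: "(('u \<Rightarrow> nat) \<times> ('u \<Rightarrow> nat)) set"
  assumes "crn_protocol R"
  shows "(stably_correct_weak R \<mu> C \<longrightarrow> stably_correct_strong R \<mu> C) \<and>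
         (haltingly_correct_weak R \<mu> C \<longrightarrow> haltingly_correct_strong R \<mu> C)"
  using main[OF assms]
  unfolding stably_correct_weak_def stably_correct_strong_def
    haltingly_correct_weak_def haltingly_correct_strong_def by blast

end
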